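(* Let $n\ge3$ and let $D$ be an affine $n$-diagram. If $D$ lies in $O_n$, then for every integer $i$ the number of intersections of $D$ with the line $x=i+\tfrac12$ is even; if $D$ does not lie in $O_n$, then for every integer $i$ this number is odd.
   Context: An affine $n$-diagram consists of the nodes $\mathbb{Z}\times\{0,1\}\subset\mathbb{R}^2$ together with curves called edges such that: every node is an endpoint of exactly one edge; edges lie in $\mathbb{R}\times[0,1]$; an edge not joining two nodes is an infinite horizontal line meeting no node, and there are finitely many such; no two edges intersect; the diagram is invariant under horizontal translation by $n$. Diagrams are taken up to isotopy. The number of intersections of a diagram $D$ with the line $x=i+\tfrac12$ means the minimal number of intersection points over all diagrams isotopic to $D$. For a commutative ring $R$ with an invertible element $v$, $D_n$ is the $R$-algebra with basis the affine $n$-diagrams (product: stack, remove $x$ closed loops, multiply by $(v+v^{-1})^x$), and $O_n$ is the $R$-span of the diagrams for which the number of intersections with $x=i+\tfrac12$ is even for every integer $i$; a diagram "lies in $O_n$" if it is one of these. *)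

theory Defs
  imports Main
begin

text \<open>A node is (x, top) with x an integer, top = True meaning the node (x,1),
  top = False meaning (x,0).  A diagram up to isotopy is determined by the
  partner function M (each node is joined to exactly one other node) and the
  number h of infinite horizontal lines.\<close>

type_synonym node = "int \<times> bool"

definition affine_diagram :: "nat \<Rightarrow> (node \<Rightarrow> node) \<Rightarrow> nat \<Rightarrow> bool" where
  "affine_diagram n M h \<longleftrightarrow>
     n \<ge> 1 \<and>
     \<comment> \<open>every node is the endpoint of exactly one edge\<close>
     (\<forall>p. M (M p) = p \<and> M p \<noteq> p) \<and>
     \<comment> \<open>invariance under horizontal translation by n\<close>
     (\<forall>a r. M (a + int n, r) = (fst (M (a, r)) + int n, snd (M (a, r)))) \<and>
     \<comment> \<open>no crossings: a cup/cap encloses only cups/caps\<close>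
     (\<forall>p c. snd (M p) = snd p \<and> fst p < c \<and> c < fst (M p) \<longrightarrow>
        snd (M (c, snd p)) = snd p \<and> fst p < fst (M (c, snd p)) \<and> fst (M (c, snd p)) < fst (M p)) \<and>
     \<comment> \<open>no crossings: through strands preserve order\<close>
     (\<forall>a b. snd (M (a, True)) = False \<and> snd (M (b, True)) = False \<and> a < b \<longrightarrow>
        fst (M (a, True)) < fst (M (b, True))) \<and>
     \<comment> \<open>a horizontal line separates top from bottom\<close>
     (h > 0 \<longrightarrow> (\<forall>p. snd (M p) = snd p))"

definition diagram_edges :: "(node \<Rightarrow> node) \<Rightarrow> node set set" where
  "diagram_edges M = {{p, M p} | p. True}"

text \<open>Minimal number of intersections of an edge between nodes with the line
  x = i + 1/2: one if the edge has endpoints on both sides, zero otherwise.\<close>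
definition edge_crosses :: "node set \<Rightarrow> int \<Rightarrow> bool" where
  "edge_crosses e i \<longleftrightarrow> (\<exists>p\<in>e. fst p \<le> i) \<and> (\<exists>q\<in>e. i < fst q)"

text \<open>Number of intersections of the diagram (M,h) with the line x = i + 1/2;
  each horizontal line meets it exactly once.\<close>
definition intersections :: "(node \<Rightarrow> node) \<Rightarrow> nat \<Rightarrow> int \<Rightarrow> nat" where
  "intersections M h i = card {e \<in> diagram_edges M. edge_crosses e i} + h"

definition in_O :: "(node \<Rightarrow> node) \<Rightarrow> nat \<Rightarrow> bool" where
  "in_O M h \<longleftrightarrow> (\<forall>i. even (intersections M h i))"

end

theory Submission
  imports Defs
begin

lemma shift_nat:
  assumes "affine_diagram n M h"
  shows "fst (M (a + int k * int n, r)) - (a + int k * int n) = fst (M (a, r)) - a"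
proof (induction k)
  case 0 then show ?case by simp
next
  case (Suc k)
  have P: "\<forall>a r. M (a + int n, r) = (fst (M (a, r)) + int n, snd (M (a, r)))"
    using assms unfolding affine_diagram_def by blast
  have e: "a + int (Suc k) * int n = (a + int k * int n) + int n" by (simp add: algebra_simps)
  show ?case unfolding e using P Suc by simp
qed

lemma shift_mod:
  assumes "affine_diagram n M h"
  shows "fst (M (a, r)) - a = fst (M (a mod int n, r)) - a mod int n"
proof (cases "a div int n \<ge> 0")
  case True
  have e: "a = a mod int n + int (nat (a div int n)) * int n" using True
    by (simp add: div_mult_mod_eq add.commute)
  show ?thesis
    using shift_nat[OF assms, of "a mod int n" "nat (a div int n)" r] e by simp
next
  case False
  have e: "a mod int n = a + int (nat (- (a div int n))) * int n" using False
    by (simp add: minus_div_mult_eq_mod[symmetric] algebra_simps)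
  show ?thesis
    using shift_nat[OF assms, of a "nat (- (a div int n))" r] e by simp
qed

lemma bounded:
  assumes "affine_diagram n M h"
  shows "\<exists>L. \<forall>p. \<bar>fst (M p) - fst p\<bar> \<le> L"
proof -
  define L where "L = Max ((\<lambda>p. \<bar>fst (M p) - fst p\<bar>) ` ({0..<int n} \<times> UNIV))"
  have n: "n \<ge> 1" using assms unfolding affine_diagram_def by blast
  have "\<bar>fst (M p) - fst p\<bar> \<le> L" for p
  proof -
    obtain a r where p: "p = (a, r)" by (cases p)
    have m: "(a mod int n, r) \<in> {0..<int n} \<times> UNIV" using n by simp
    have "\<bar>fst (M (a mod int n, r)) - a mod int n\<bar> \<le> L"
      unfolding L_def by (rule Max_ge) (use m in force)+
    then show ?thesis using shift_mod[OF assms, of a r] p by simp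
  qed
  then show ?thesis by blast
qed

definition Aset :: "(node \<Rightarrow> node) \<Rightarrow> int \<Rightarrow> node set" where
  "Aset M i = {p. fst p \<le> i \<and> i < fst (M p)}"

lemma card_edges:
  assumes "affine_diagram n M h"
  shows "card {e \<in> diagram_edges M. edge_crosses e i} = card (Aset M i)"
proof -
  have inv: "\<And>p. M (M p) = p" using assms unfolding affine_diagram_def by blast
  have "bij_betw (\<lambda>p. {p, M p}) (Aset M i) {e \<in> diagram_edges M. edge_crosses e i}"
  proof (rule bij_betwI')
    fix p q assume "p \<in> Aset M i" "q \<in> Aset M i"
    then show "({p, M p} = {q, M q}) = (p = q)"
      unfolding Aset_def by (auto simp: doubleton_eq_iff)
  next
    fix p assume "p \<in> Aset M i"
    then show "{p, M p} \<in> {e \<in> diagram_edges M. edge_crosses e i}"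
      unfolding Aset_def diagram_edges_def edge_crosses_def by (cases p) auto
  next
    fix e assume "e \<in> {e \<in> diagram_edges M. edge_crosses e i}"
    then obtain p where e: "e = {p, M p}" and c: "edge_crosses e i"
      unfolding diagram_edges_def by auto
    show "\<exists>p\<in>Aset M i. e = {p, M p}"
    proof (cases "fst p \<le> i")
      case True
      then have "p \<in> Aset M i" using c e unfolding edge_crosses_def Aset_def by auto
      then show ?thesis using e by blast
    next
      case False
      then have "M p \<in> Aset M i" using c e inv unfolding edge_crosses_def Aset_def by auto
      moreover have "e = {M p, M (M p)}" using e inv by auto
      ultimately show ?thesis by blast
    qed
  qed
  then show ?thesis by (simp add: bij_betw_same_card[symmetric])
qed

definition key :: "node \<Rightarrow> int" where
  "key p = 2 * fst p + (if snd p then 1 else 0)"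

lemma key_inj: "key p = key q \<Longrightarrow> p = q"
  unfolding key_def by (cases p, cases q) (auto split: if_splits, presburger, presburger)

lemma even_invol:
  fixes S :: "node set"
  assumes fin: "finite S" and cl: "\<And>p. p \<in> S \<Longrightarrow> M p \<in> S"
    and inv: "\<And>p. M (M p) = p" and nf: "\<And>p. M p \<noteq> p"
  shows "even (card S)"
proof -
  define S1 where "S1 = {p \<in> S. key p < key (M p)}"
  define S2 where "S2 = {p \<in> S. key (M p) < key p}"
  have un: "S = S1 \<union> S2"
    unfolding S1_def S2_def using key_inj nf
    by (auto, metis linorder_neqE_linordered_idom)
  have dj: "S1 \<inter> S2 = {}" unfolding S1_def S2_def by auto
  have "bij_betw M S1 S2"
  proof (rule bij_betw_byWitness[where f'=M])
    show "M ` S1 \<subseteq> S2" unfolding S1_def S2_def using inv cl by auto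
    show "M ` S2 \<subseteq> S1" unfolding S1_def S2_def using inv cl by auto
  qed (auto simp: inv)
  then have "card S1 = card S2" by (rule bij_betw_same_card)
  moreover have "card S = card S1 + card S2"
    using un dj fin by (simp add: card_Un_disjoint)
  ultimately show ?thesis by simp
qed

lemma parity:
  assumes D: "affine_diagram n M h" and L: "\<And>p. \<bar>fst (M p) - fst p\<bar> \<le> L"
    and ji: "j + L \<le> i" and jle: "j \<le> i"
  shows "even (card (Aset M i) + card (Aset M j))"
proof -
  have inv: "\<And>p. M (M p) = p" and nf: "\<And>p. M p \<noteq> p"
    using D unfolding affine_diagram_def by blast+
  define W where "W = {j<..i} \<times> (UNIV :: bool set)"
  define Win where "Win = {p \<in> W. M p \<in> W}"
  have finW: "finite W" unfolding W_def by simp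
  have cW: "card W = 2 * nat (i - j)" unfolding W_def by (simp add: card_cartesian_product)
  have Ai: "Aset M i \<subseteq> W"
  proof
    fix p assume "p \<in> Aset M i"
    moreover have "\<bar>fst (M p) - fst p\<bar> \<le> L" by (rule L)
    ultimately show "p \<in> W" unfolding Aset_def W_def using ji by (cases p) auto
  qed
  have Aj: "M ` Aset M j \<subseteq> W"
  proof
    fix x assume "x \<in> M ` Aset M j"
    then obtain q where x: "x = M q" and q: "q \<in> Aset M j" by blast
    have "\<bar>fst (M q) - fst q\<bar> \<le> L" by (rule L)
    then show "x \<in> W" unfolding x W_def using q ji unfolding Aset_def
      by (cases "M q") auto
  qed
  have un: "W = Win \<union> Aset M i \<union> M ` Aset M j"
  proof
    show "W \<subseteq> Win \<union> Aset M i \<union> M ` Aset M j"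
    proof
      fix p assume p: "p \<in> W"
      show "p \<in> Win \<union> Aset M i \<union> M ` Aset M j"
      proof (cases "M p \<in> W")
        case True then show ?thesis using p unfolding Win_def by blast
      next
        case False
        then have "fst (M p) > i \<or> fst (M p) \<le> j" unfolding W_def
          by (cases "M p") auto
        then show ?thesis
        proof
          assume "fst (M p) > i" then have "p \<in> Aset M i" using p unfolding W_def Aset_def by auto
          then show ?thesis by blast
        next
          assume "fst (M p) \<le> j"
          then have "M p \<in> Aset M j" using p inv unfolding W_def Aset_def by auto
          then have "M (M p) \<in> M ` Aset M j" by blast
          then show ?thesis using inv by simp
        qed
      qed
    qed
  next
    show "Win \<union> Aset M i \<union> M ` Aset M j \<subseteq> W" using Ai Aj unfolding Win_def by blast
  qed
  have d1: "Win \<inter> Aset M i = {}" unfolding Win_def W_def Aset_def by auto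
  have d2: "(Win \<union> Aset M i) \<inter> M ` Aset M j = {}"
    unfolding Win_def W_def Aset_def using inv jle by auto
  have fWin: "finite Win" using finW unfolding Win_def by simp
  have fAi: "finite (Aset M i)" using finW Ai finite_subset by blast
  have fAj: "finite (M ` Aset M j)" using finW Aj finite_subset by blast
  have injM: "inj M" by (metis inv injI)
  have cAj: "card (M ` Aset M j) = card (Aset M j)" using injM by (simp add: card_image inj_on_subset)
  have "card W = card Win + card (Aset M i) + card (M ` Aset M j)"
    using un d1 d2 fWin fAi fAj by (simp add: card_Un_disjoint)
  moreover have "even (card Win)"
    by (rule even_invol[OF fWin _ inv nf]) (auto simp: Win_def inv)
  ultimately have "even (card (Aset M i) + card (Aset M j) + card Win)" using cW cAj
    by (metis add.commute add.left_commute dvd_triv_left)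
  then show ?thesis using \<open>even (card Win)\<close> by simp
qed

theorem proposition2p3p4:
  fixes n :: nat and M :: "node \<Rightarrow> node" and h :: nat
  assumes "n \<ge> 3" and "affine_diagram n M h"
  shows "(in_O M h \<longrightarrow> (\<forall>i. even (intersections M h i)))
       \<and> (\<not> in_O M h \<longrightarrow> (\<forall>i. odd (intersections M h i)))"
proof -
  obtain L where L: "\<And>p. \<bar>fst (M p) - fst p\<bar> \<le> L" using bounded[OF assms(2)] by blast
  have I: "intersections M h i = card (Aset M i) + h" for i
    unfolding intersections_def card_edges[OF assms(2)] ..
  have same: "even (card (Aset M i) + card (Aset M i'))" for i i'
  proof -
    define j where "j = min i i' - \<bar>L\<bar>"
    have a: "even (card (Aset M i) + card (Aset M j))"
      by (rule parity[OF assms(2) L]) (auto simp: j_def)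
    have b: "even (card (Aset M i') + card (Aset M j))"
      by (rule parity[OF assms(2) L]) (auto simp: j_def)
    from a b show ?thesis by presburger
  qed
  show ?thesis
  proof (intro conjI impI allI)
    fix i assume "in_O M h" then show "even (intersections M h i)" unfolding in_O_def by blast
  next
    fix i assume "\<not> in_O M h"
    then obtain i0 where "odd (intersections M h i0)" unfolding in_O_def by blast
    then show "odd (intersections M h i)" using same[of i i0] unfolding I by presburger
  qed
qed

end
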